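(* Let $\sigma$ be a convex polytope in a Euclidean vector space $\mathbb{E}$ and $D\subseteq\mathbb{E}$ a finite set that is sufficiently rich for $\sigma$. Then among the points of $\sigma$ that minimize the Euclidean distance to $Z(D)$ there is a vertex of $\sigma$. Moreover, the set of points of $\sigma$ maximizing the distance to $Z(D)$ is a face of $\sigma$.
   Context: $Z(D)=\sum_{z\in D}[0,z]$ (Minkowski sum). $D$ is sufficiently rich for $\sigma$ if $w-v\in D$ for any two distinct vertices $v,w$ of $\sigma$. *)

theory Defs
  imports "HOL-Analysis.Analysis" "HOL-Library.Set_Algebras"
begin

definition zonotope :: "'a::euclidean_space set \<Rightarrow> 'a set" where
  "zonotope D = (\<Sum>z\<in>D. closed_segment 0 z)"

definition sufficiently_rich :: "'a::euclidean_space set \<Rightarrow> 'a set \<Rightarrow> bool" where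
  "sufficiently_rich D \<sigma> \<longleftrightarrow>
     (\<forall>v w. v extreme_point_of \<sigma> \<longrightarrow> w extreme_point_of \<sigma> \<longrightarrow> v \<noteq> w \<longrightarrow> w - v \<in> D)"

end

theory Submission
  imports Defs
begin

lemma seg0_mem: "0 \<le> t \<Longrightarrow> t \<le> 1 \<Longrightarrow> t *\<^sub>R d \<in> closed_segment 0 (d::'a::real_vector)"
  by (auto simp: in_segment)

lemma zono_remove:
  assumes "finite D" "d \<in> D"
  shows "zonotope D = closed_segment 0 d + zonotope (D - {d})"
  unfolding zonotope_def using sum.remove[OF assms] by simp

lemma zono_props:
  assumes "finite D"
  shows "compact (zonotope D) \<and> convex (zonotope D) \<and> 0 \<in> zonotope D"
  using assms
proof (induction D rule: finite_induct)
  case empty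
  then show ?case by (simp add: zonotope_def)
next
  case (insert d F)
  have eq: "zonotope (insert d F) = closed_segment 0 d + zonotope F"
    unfolding zonotope_def using insert by simp
  have e2: "closed_segment 0 d + zonotope F = {x + y |x y. x \<in> closed_segment 0 d \<and> y \<in> zonotope F}"
    by (auto simp: set_plus_def)
  have "compact (closed_segment 0 d + zonotope F)"
    unfolding e2 by (rule compact_sums) (use insert in auto)
  moreover have "convex (closed_segment 0 d + zonotope F)"
    by (rule convex_set_plus) (use insert in auto)
  moreover have "0 \<in> closed_segment 0 d + zonotope F"
    using insert set_plus_intro[of 0 "closed_segment 0 d" 0 "zonotope F"] by auto
  ultimately show ?case using eq by simp
qed

lemma zono_move:
  assumes "finite D" "d \<in> D" "z \<in> zonotope D" "0 \<le> a" "0 \<le> b" "a + b \<le> 1"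
  shows "z + a *\<^sub>R d \<in> zonotope D \<or> z + b *\<^sub>R (- d) \<in> zonotope D"
proof -
  from assms(3) obtain p q where p: "p \<in> closed_segment 0 d" and q: "q \<in> zonotope (D - {d})"
    and z: "z = p + q"
    using zono_remove[OF assms(1,2)] by (auto elim: set_plus_elim)
  from p obtain t where t: "0 \<le> t" "t \<le> 1" "p = t *\<^sub>R d" by (auto simp: in_segment)
  show ?thesis
  proof (cases "t + a \<le> 1")
    case True
    have "(t + a) *\<^sub>R d \<in> closed_segment 0 d" by (rule seg0_mem) (use True t assms in auto)
    hence "(t + a) *\<^sub>R d + q \<in> zonotope D"
      using q zono_remove[OF assms(1,2)] by auto
    moreover have "(t + a) *\<^sub>R d + q = z + a *\<^sub>R d" using z t by (simp add: algebra_simps)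
    ultimately show ?thesis by simp
  next
    case False
    have "(t - b) *\<^sub>R d \<in> closed_segment 0 d" by (rule seg0_mem) (use False t assms in auto)
    hence "(t - b) *\<^sub>R d + q \<in> zonotope D"
      using q zono_remove[OF assms(1,2)] by auto
    moreover have "(t - b) *\<^sub>R d + q = z + b *\<^sub>R (- d)" using z t by (simp add: algebra_simps)
    ultimately show ?thesis by simp
  qed
qed

lemma conv_shift:
  fixes W :: "'a::real_vector set"
  assumes "finite W" "w \<in> W" "u \<in> W" "w \<noteq> u" "\<forall>v\<in>W. 0 \<le> c v" "sum c W = 1"
    and x: "x = (\<Sum>v\<in>W. c v *\<^sub>R v)"
  shows "x + c w *\<^sub>R (u - w) \<in> convex hull (W - {w})"
proof -
  define c' where "c' = (\<lambda>v. c v + (if v = u then c w else 0))"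
  have fin: "finite (W - {w})" using assms by simp
  have uin: "u \<in> W - {w}" using assms by simp
  have "sum c' (W - {w}) = sum c (W - {w}) + c w"
    unfolding c'_def using fin uin by (simp add: sum.distrib)
  also have "\<dots> = 1" using sum.remove[OF assms(1,2), of c] assms(6) by simp
  finally have s1: "sum c' (W - {w}) = 1" .
  have "(\<Sum>v\<in>W - {w}. c' v *\<^sub>R v) = (\<Sum>v\<in>W - {w}. c v *\<^sub>R v + (if v = u then c w *\<^sub>R u else 0))"
    unfolding c'_def by (intro sum.cong) (auto simp: scaleR_add_left)
  also have "\<dots> = (\<Sum>v\<in>W - {w}. c v *\<^sub>R v) + c w *\<^sub>R u"
    using fin uin by (simp add: sum.distrib)
  also have "\<dots> = x + c w *\<^sub>R (u - w)"
    using sum.remove[OF assms(1,2), of "\<lambda>v. c v *\<^sub>R v"] x by (simp add: algebra_simps)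
  finally have s2: "(\<Sum>v\<in>W - {w}. c' v *\<^sub>R v) = x + c w *\<^sub>R (u - w)" .
  have "\<forall>v\<in>W - {w}. 0 \<le> c' v" using assms(2,5) unfolding c'_def by auto
  then show ?thesis unfolding convex_hull_finite[OF fin] using s1 s2 by blast
qed

lemma core:
  fixes W D :: "'a::euclidean_space set"
  assumes "finite D" "finite W" "\<forall>a\<in>W. \<forall>b\<in>W. a \<noteq> b \<longrightarrow> b - a \<in> D"
    and "x \<in> convex hull W" "z \<in> zonotope D"
  shows "\<exists>w\<in>W. z + w - x \<in> zonotope D"
  using assms(2-5)
proof (induction "card W" arbitrary: W x z rule: less_induct)
  case less
  show ?case
  proof (cases "card W \<le> 1")
    case True
    have "W \<noteq> {}" using less.prems(3) by auto
    with True less.prems(1) obtain w where W: "W = {w}"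
      by (metis One_nat_def card_0_eq card_Suc_eq le_Suc_eq le_zero_eq)
    then have "x = w" using less.prems(3) by simp
    then show ?thesis using W less.prems(4) by simp
  next
    case False
    then obtain w where w: "w \<in> W" by fastforce
    have "W - {w} \<noteq> {}" using False w
      by (metis One_nat_def card.empty card.insert empty_iff finite.intros(1) insert_Diff le_refl)
    then obtain u where u: "u \<in> W" "u \<noteq> w" by auto
    obtain c where c: "\<forall>v\<in>W. 0 \<le> c v" "sum c W = 1" "x = (\<Sum>v\<in>W. c v *\<^sub>R v)"
      using less.prems(3) unfolding convex_hull_finite[OF less.prems(1)] by auto
    have d: "u - w \<in> D" using less.prems(2) w u by auto
    have "sum c {w, u} \<le> sum c W"
      by (rule sum_mono2) (use less.prems(1) w u c in auto)
    hence ab: "c w + c u \<le> 1" using u c by simp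
    have x1: "x + c w *\<^sub>R (u - w) \<in> convex hull (W - {w})"
      by (rule conv_shift) (use less.prems(1) w u c in auto)
    have x2: "x + c u *\<^sub>R (w - u) \<in> convex hull (W - {u})"
      by (rule conv_shift) (use less.prems(1) w u c in auto)
    have cw: "card (W - {w}) < card W" "card (W - {u}) < card W"
      using less.prems(1) w u by (meson card_Diff1_less)+
    have sub: "\<forall>a\<in>W - {w}. \<forall>b\<in>W - {w}. a \<noteq> b \<longrightarrow> b - a \<in> D"
              "\<forall>a\<in>W - {u}. \<forall>b\<in>W - {u}. a \<noteq> b \<longrightarrow> b - a \<in> D"
      using less.prems(2) by auto
    from zono_move[OF assms(1) d less.prems(4), of "c w" "c u"] c w u ab
    consider "z + c w *\<^sub>R (u - w) \<in> zonotope D" | "z + c u *\<^sub>R (w - u) \<in> zonotope D"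
      by auto
    then show ?thesis
    proof cases
      case 1
      from less.hyps[OF cw(1) _ sub(1) x1 1] less.prems(1)
      obtain w' where "w' \<in> W - {w}"
        "z + c w *\<^sub>R (u - w) + w' - (x + c w *\<^sub>R (u - w)) \<in> zonotope D" by auto
      then show ?thesis by (auto simp: algebra_simps)
    next
      case 2
      from less.hyps[OF cw(2) _ sub(2) x2 2] less.prems(1)
      obtain w' where "w' \<in> W - {u}"
        "z + c u *\<^sub>R (w - u) + w' - (x + c u *\<^sub>R (w - u)) \<in> zonotope D" by auto
      then show ?thesis by (auto simp: algebra_simps)
    qed
  qed
qed

lemma infdist_convex:
  fixes Z :: "'a::euclidean_space set"
  assumes "convex Z" "closed Z" "Z \<noteq> {}"
  shows "convex_on UNIV (\<lambda>x. infdist x Z)"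
proof (rule convex_onI)
  fix t :: real and a b :: 'a
  assume t: "0 < t" "t < 1"
  obtain z1 where z1: "z1 \<in> Z" "infdist a Z = dist a z1" using infdist_attains_inf[OF assms(2,3)] by blast
  obtain z2 where z2: "z2 \<in> Z" "infdist b Z = dist b z2" using infdist_attains_inf[OF assms(2,3)] by blast
  have zc: "(1 - t) *\<^sub>R z1 + t *\<^sub>R z2 \<in> Z"
    using assms(1) z1 z2 t unfolding convex_def by auto
  have "infdist ((1 - t) *\<^sub>R a + t *\<^sub>R b) Z \<le> dist ((1 - t) *\<^sub>R a + t *\<^sub>R b) ((1 - t) *\<^sub>R z1 + t *\<^sub>R z2)"
    by (rule infdist_le[OF zc])
  also have "\<dots> = norm ((1 - t) *\<^sub>R (a - z1) + t *\<^sub>R (b - z2))"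
    by (simp add: dist_norm algebra_simps)
  also have "\<dots> \<le> norm ((1 - t) *\<^sub>R (a - z1)) + norm (t *\<^sub>R (b - z2))" by (rule norm_triangle_ineq)
  also have "\<dots> = (1 - t) * dist a z1 + t * dist b z2" using t by (simp add: dist_norm)
  finally show "infdist ((1 - t) *\<^sub>R a + t *\<^sub>R b) Z \<le> (1 - t) * infdist a Z + t * infdist b Z"
    using z1 z2 by simp
qed simp

lemma dist_bound:
  fixes W D :: "'a::euclidean_space set"
  assumes "finite D" "finite W" "\<forall>a\<in>W. \<forall>b\<in>W. a \<noteq> b \<longrightarrow> b - a \<in> D"
    and "x \<in> convex hull W"
  shows "\<exists>w\<in>W. infdist w (zonotope D) \<le> infdist x (zonotope D)"
proof -
  have zp: "compact (zonotope D)" "0 \<in> zonotope D" using zono_props[OF assms(1)] by auto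
  obtain z where z: "z \<in> zonotope D" "infdist x (zonotope D) = dist x z"
    using infdist_attains_inf[OF compact_imp_closed[OF zp(1)], of x] zp(2) by blast
  obtain w where w: "w \<in> W" "z + w - x \<in> zonotope D" using core[OF assms z(1)] by blast
  have "infdist w (zonotope D) \<le> dist w (z + w - x)" by (rule infdist_le[OF w(2)])
  also have "\<dots> = dist x z" by (simp add: dist_norm algebra_simps)
  finally show ?thesis using w z by auto
qed

theorem mainTheorem16:
  fixes \<sigma> D :: "'a::euclidean_space set"
  assumes "polytope \<sigma>" and "\<sigma> \<noteq> {}"
    and "finite D" and "sufficiently_rich D \<sigma>"
  shows "(\<exists>v. v extreme_point_of \<sigma> \<and>
            v \<in> {x \<in> \<sigma>. \<forall>y\<in>\<sigma>. infdist x (zonotope D) \<le> infdist y (zonotope D)}) \<and>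
         {x \<in> \<sigma>. \<forall>y\<in>\<sigma>. infdist y (zonotope D) \<le> infdist x (zonotope D)} face_of \<sigma>"
proof -
  define f where "f = (\<lambda>x. infdist x (zonotope D))"
  define V where "V = {x. x extreme_point_of \<sigma>}"
  obtain v0 where v0: "finite v0" "\<sigma> = convex hull v0" using assms(1) unfolding polytope_def by blast
  have sV: "\<sigma> = convex hull V"
    unfolding V_def v0(2) using Krein_Milman_polytope[OF v0(1)] .
  have finV: "finite V"
    unfolding V_def v0(2) by (rule finite_subset[OF extreme_points_of_convex_hull v0(1)])
  have Vs: "V \<subseteq> \<sigma>" unfolding V_def by (auto simp: extreme_point_of_def)
  have Vne: "V \<noteq> {}" using sV assms(2) by auto
  have rich: "\<forall>a\<in>W. \<forall>b\<in>W. a \<noteq> b \<longrightarrow> b - a \<in> D" if "W \<subseteq> V" for W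
    using that assms(4) unfolding sufficiently_rich_def V_def by blast
  have zp: "compact (zonotope D)" "convex (zonotope D)" "0 \<in> zonotope D"
    using zono_props[OF assms(3)] by auto
  have fconv: "convex_on UNIV f"
    unfolding f_def by (rule infdist_convex) (use zp compact_imp_closed in auto)
  define m where "m = Min (f ` V)"
  have "m \<in> f ` V" unfolding m_def using finV Vne by simp
  then obtain v where v: "v \<in> V" "f v = m" by auto
  have vmin: "f v \<le> f y" if "y \<in> \<sigma>" for y
  proof -
    have yV: "y \<in> convex hull V" using that sV by simp
    obtain w where "w \<in> V" "f w \<le> f y"
      using dist_bound[OF assms(3) finV rich[OF order_refl] yV] unfolding f_def by blast
    moreover have "m \<le> f w" unfolding m_def using finV \<open>w \<in> V\<close> by simp
    ultimately show ?thesis using v by simp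
  qed
  have P1: "\<exists>v. v extreme_point_of \<sigma> \<and>
            v \<in> {x \<in> \<sigma>. \<forall>y\<in>\<sigma>. infdist x (zonotope D) \<le> infdist y (zonotope D)}"
    using v vmin Vs unfolding V_def f_def by auto
  define M where "M = {x \<in> \<sigma>. \<forall>y\<in>\<sigma>. f y \<le> f x}"
  have claimA: "x \<in> convex hull {v \<in> V. f x \<le> f v}" if x: "x \<in> M" for x
  proof -
    obtain c where c: "\<forall>v\<in>V. 0 \<le> c v" "sum c V = 1" "(\<Sum>v\<in>V. c v *\<^sub>R v) = x"
      using x sV unfolding M_def convex_hull_finite[OF finV] by auto
    have "f x \<le> (\<Sum>v\<in>V. c v * f v)"
      using convex_on_sum[OF finV Vne fconv, of c "\<lambda>v. v"] c by simp
    moreover have "(\<Sum>v\<in>V. c v * (f x - f v)) = sum c V * f x - (\<Sum>v\<in>V. c v * f v)"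
      by (simp only: right_diff_distrib sum_subtractf sum_distrib_right)
    ultimately have le0: "(\<Sum>v\<in>V. c v * (f x - f v)) \<le> 0"
      using c(2) by simp
    moreover have nn: "\<forall>v\<in>V. 0 \<le> c v * (f x - f v)"
    proof
      fix v assume v: "v \<in> V"
      have "f v \<le> f x" using v x Vs unfolding M_def by blast
      then show "0 \<le> c v * (f x - f v)" using c(1) v by simp
    qed
    ultimately have s0: "(\<Sum>v\<in>V. c v * (f x - f v)) = 0"
    proof -
      have "0 \<le> (\<Sum>v\<in>V. c v * (f x - f v))" using nn by (simp add: sum_nonneg)
      then show ?thesis using le0 by linarith
    qed
    have z0: "\<forall>v\<in>V. c v * (f x - f v) = 0"
      using iffD1[OF sum_nonneg_eq_0_iff[OF finV, of "\<lambda>v. c v * (f x - f v)"] s0] nn by blast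
    define W where "W = {v \<in> V. f x \<le> f v}"
    have WV: "W \<subseteq> V" unfolding W_def by auto
    have out: "c v = 0" if "v \<in> V - W" for v
    proof -
      have "c v * (f x - f v) = 0" "\<not> f x \<le> f v" using z0 that unfolding W_def by auto
      then show ?thesis by simp
    qed
    have "sum c W = sum c V"
      by (rule sum.mono_neutral_left[OF finV WV]) (use out in auto)
    moreover have "(\<Sum>v\<in>W. c v *\<^sub>R v) = (\<Sum>v\<in>V. c v *\<^sub>R v)"
      by (rule sum.mono_neutral_left[OF finV WV]) (use out in auto)
    moreover have finW: "finite W" using finV WV finite_subset by blast
    ultimately have "\<exists>u. (\<forall>x\<in>W. 0 \<le> u x) \<and> sum u W = 1 \<and> (\<Sum>x\<in>W. u x *\<^sub>R x) = x"
      using c WV by (intro exI[of _ c]) auto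
    hence "x \<in> convex hull W"
      unfolding convex_hull_finite[OF finW] by simp
    then show ?thesis unfolding W_def .
  qed
  have convM: "convex M"
  proof (rule convexI)
    fix x1 x2 :: 'a and u1 u2 :: real
    assume x: "x1 \<in> M" "x2 \<in> M" and u: "0 \<le> u1" "0 \<le> u2" "u1 + u2 = 1"
    have x1s: "x1 \<in> \<sigma>" "\<forall>y\<in>\<sigma>. f y \<le> f x1" using x(1) unfolding M_def by simp_all
    have x2s: "x2 \<in> \<sigma>" "\<forall>y\<in>\<sigma>. f y \<le> f x2" using x(2) unfolding M_def by simp_all
    have eq: "f x1 = f x2" using x1s x2s by (meson antisym)
    define W where "W = {v \<in> V. f x1 \<le> f v}"
    have h1: "x1 \<in> convex hull W" using claimA[OF x(1)] unfolding W_def .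
    have h2: "x2 \<in> convex hull W" using claimA[OF x(2)] unfolding W_def eq .
    have yW: "u1 *\<^sub>R x1 + u2 *\<^sub>R x2 \<in> convex hull W"
      by (rule convexD[OF convex_convex_hull h1 h2 u])
    have WV: "W \<subseteq> V" unfolding W_def by blast
    obtain w where w: "w \<in> W" "f w \<le> f (u1 *\<^sub>R x1 + u2 *\<^sub>R x2)"
      using dist_bound[OF assms(3) finite_subset[OF WV finV] rich[OF WV] yW] unfolding f_def by blast
    have ys: "u1 *\<^sub>R x1 + u2 *\<^sub>R x2 \<in> \<sigma>"
    proof -
      have "x1 \<in> convex hull V" "x2 \<in> convex hull V" using x1s x2s sV by simp_all
      then have "u1 *\<^sub>R x1 + u2 *\<^sub>R x2 \<in> convex hull V"
        using convexD[OF convex_convex_hull _ _ u] by blast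
      then show ?thesis using sV by simp
    qed
    have "f x1 \<le> f w" using w(1) unfolding W_def by blast
    hence "f x1 \<le> f (u1 *\<^sub>R x1 + u2 *\<^sub>R x2)" using w(2) by linarith
    hence "\<forall>y\<in>\<sigma>. f y \<le> f (u1 *\<^sub>R x1 + u2 *\<^sub>R x2)" using x1s(2) by (meson order_trans)
    then show "u1 *\<^sub>R x1 + u2 *\<^sub>R x2 \<in> M" using ys unfolding M_def by blast
  qed
  have ext: "a \<in> M \<and> b \<in> M" if ab: "a \<in> \<sigma>" "b \<in> \<sigma>" "x \<in> M" "x \<in> open_segment a b" for a b x
  proof -
    obtain t where t: "0 < t" "t < 1" "x = (1 - t) *\<^sub>R a + t *\<^sub>R b"
      using ab(4) unfolding in_segment by blast
    have fx: "f x \<le> (1 - t) * f a + t * f b"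
      using convex_onD[OF fconv, of t a b] t by simp
    have xs: "\<forall>y\<in>\<sigma>. f y \<le> f x" using ab(3) unfolding M_def by simp
    have fa: "f a \<le> f x" "f b \<le> f x" using xs ab(1,2) by simp_all
    have ma: "(1 - t) * f a \<le> (1 - t) * f x" using fa(1) t by (intro mult_left_mono) simp_all
    have mb: "t * f b \<le> t * f x" using fa(2) t by (intro mult_left_mono) simp_all
    have "f a = f x"
    proof (rule ccontr)
      assume "f a \<noteq> f x"
      hence "f a < f x" using fa by simp
      hence "(1 - t) * f a < (1 - t) * f x" using t by (intro mult_strict_left_mono) simp_all
      thus False using fx mb by (simp add: algebra_simps)
    qed
    moreover have "f b = f x"
    proof (rule ccontr)
      assume "f b \<noteq> f x"
      hence "f b < f x" using fa by simp
      hence "t * f b < t * f x" using t by (intro mult_strict_left_mono) simp_all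
      thus False using fx ma by (simp add: algebra_simps)
    qed
    ultimately show ?thesis using ab(1,2) xs unfolding M_def by simp
  qed
  have "M face_of \<sigma>"
    unfolding face_of_def
  proof (intro conjI)
    show "M \<subseteq> \<sigma>" unfolding M_def by blast
    show "convex M" by (rule convM)
    show "\<forall>a\<in>\<sigma>. \<forall>b\<in>\<sigma>. \<forall>x\<in>M. x \<in> open_segment a b \<longrightarrow> a \<in> M \<and> b \<in> M"
      using ext by blast
  qed
  then show ?thesis using P1 unfolding M_def f_def by simp
qed

end
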